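(* Let $A\in\mathbb{R}^{d\times d}$, $B\in\mathbb{R}^{d\times n}$, $C\in\mathbb{R}^{n\times d}$, $D\in\mathbb{R}^{n\times n}$ with every eigenvalue of $A$ in the closed left half-plane, and let $H(\xi)=D+C(\xi I-A)^{-1}B$. Let $X\in\mathbb{R}^{d\times d}$ be symmetric and let $L,W$ be real matrices (with the same number of rows) satisfying $-A^TX-XA=L^TL$, $C-B^TX=W^TL$ and $D+D^T=W^TW$. Let $$Z(\xi)=W+L(\xi I-A)^{-1}B,\qquad Y(\xi)=\begin{bmatrix}\xi I-A & -B\\ L & W\end{bmatrix}.$$ Then $Z^\star Z=H+H^\star$, and $Z$ is a spectral factor of $H+H^\star$ if and only if $Y(\lambda)$ has full row rank for all $\lambda\in\mathbb{C}$ with $\mathrm{Re}(\lambda)>0$.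
   Context: For a real rational matrix $G$, $G^\star(\xi):=G(-\xi)^T$. If $Z\in\mathbb{R}^{r\times n}(\xi)$ and $F=Z^\star Z$, $Z$ is called a spectral factor of $F$ if $Z$ is analytic in the open right half-plane and $Z(\lambda)$ has full row rank for every $\lambda$ in the open right half-plane. *)

theory Defs
  imports "HOL-Analysis.Analysis"
begin

definition cmat :: "real^'n^'m \<Rightarrow> complex^'n^'m" where
  "cmat M = (\<chi> i j. complex_of_real (M $ i $ j))"

definition is_ceigenvalue :: "real^'n^'n \<Rightarrow> complex \<Rightarrow> bool" where
  "is_ceigenvalue A s \<longleftrightarrow> (\<exists>v. v \<noteq> 0 \<and> cmat A *v v = s *s v)"

text \<open>The rational matrix D + C (xi I - A)^-1 B, as a function on complex numbers
  (junk values at the finitely many eigenvalues of A).\<close>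
definition ratmat :: "real^'d^'d \<Rightarrow> real^'n^'d \<Rightarrow> real^'d^'r \<Rightarrow> real^'n^'r
    \<Rightarrow> complex \<Rightarrow> complex^'n^'r" where
  "ratmat A B C D \<xi> = cmat D + cmat C ** matrix_inv (mat \<xi> - cmat A) ** cmat B"

definition para_adj :: "(complex \<Rightarrow> complex^'n^'m) \<Rightarrow> complex \<Rightarrow> complex^'m^'n" where
  "para_adj G \<xi> = transpose (G (- \<xi>))"

text \<open>Equality of rational matrices: the representing functions agree up to finitely
  many points (poles).\<close>
definition rat_eq :: "(complex \<Rightarrow> complex^'n^'m) \<Rightarrow> (complex \<Rightarrow> complex^'n^'m) \<Rightarrow> bool" where
  "rat_eq F G \<longleftrightarrow> finite {\<xi>. F \<xi> \<noteq> G \<xi>}"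

definition RHP :: "complex set" where
  "RHP = {s. Re s > 0}"

definition spectral_factor :: "(complex \<Rightarrow> complex^'n^'r) \<Rightarrow> (complex \<Rightarrow> complex^'n^'n) \<Rightarrow> bool" where
  "spectral_factor Z F \<longleftrightarrow>
     rat_eq (\<lambda>\<xi>. para_adj Z \<xi> ** Z \<xi>) F \<and>
     (\<forall>i j. (\<lambda>\<xi>. Z \<xi> $ i $ j) analytic_on RHP) \<and>
     (\<forall>s\<in>RHP. rank (Z s) = CARD('r))"

text \<open>The block matrix Y(xi) = [xi I - A, -B; L, W].\<close>
definition Ymat :: "real^'d^'d \<Rightarrow> real^'n^'d \<Rightarrow> real^'d^'r \<Rightarrow> real^'n^'r
    \<Rightarrow> complex \<Rightarrow> complex^('d + 'n)^('d + 'r)" where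
  "Ymat A B L W \<xi> = (\<chi> i j. case i of
       Inl a \<Rightarrow> (case j of Inl b \<Rightarrow> (mat \<xi> - cmat A) $ a $ b | Inr c \<Rightarrow> - (cmat B $ a $ c))
     | Inr p \<Rightarrow> (case j of Inl b \<Rightarrow> cmat L $ p $ b | Inr c \<Rightarrow> cmat W $ p $ c))"

end

theory Submission
  imports Defs "HOL-Computational_Algebra.Polynomial"
begin


lemma vm_sum_rows: "(y::'a::field^'m) v* M = (\<Sum>i\<in>UNIV. y$i *s row i M)"
  by (simp add: vec_eq_iff vector_matrix_mult_def sum_component row_def mult.commute)

lemma axis_vm: "axis i (1::'a::comm_ring_1) v* M = row i M"
proof -
  have "\<And>k. (\<Sum>j\<in>UNIV. (if j = i then 1 else 0) * M$j$k) = M$i$k"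
  proof -
    fix k
    have "(\<Sum>j\<in>UNIV. (if j = i then 1 else 0) * M$j$k) = (\<Sum>j\<in>UNIV. if j = i then M$j$k else 0)"
      by (rule sum.cong) auto
    then show "(\<Sum>j\<in>UNIV. (if j = i then 1 else 0) * M$j$k) = M$i$k" by simp
  qed
  then show ?thesis by (simp add: vec_eq_iff vector_matrix_mult_def axis_def row_def)
qed

lemma full_row_rank_iff:
  fixes M :: "'a::field^'n^'m"
  shows "rank M = CARD('m) \<longleftrightarrow> (\<forall>y. y v* M = 0 \<longrightarrow> y = 0)"
proof -
  let ?r = "\<lambda>i. row i M"
  let ?S = "range ?r"
  have S: "rows M = ?S" by (auto simp: rows_def)
  have fS: "finite ?S" by simp
  have cS: "card ?S \<le> CARD('m)" by (rule card_image_le) simp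
  show ?thesis
  proof
    assume rk: "rank M = CARD('m)"
    have d: "vec.dim ?S = CARD('m)" using rk by (simp add: row_rank_def_gen S)
    have "vec.dim ?S \<le> card ?S" by (rule vec.dim_le_card'[OF fS])
    hence cS2: "card ?S = CARD('m)" using d cS by linarith
    have inj: "inj ?r" using cS2 by (simp add: eq_card_imp_inj_on)
    have ind: "vec.independent ?S"
      by (rule vec.card_le_dim_spanning[of ?S ?S]) (auto simp: d cS2 intro: vec.span_base)
    show "\<forall>y. y v* M = 0 \<longrightarrow> y = 0"
    proof (intro allI impI)
      fix y :: "'a^'m" assume y: "y v* M = 0"
      define c where "c v = y $ (inv ?r v)" for v
      have "(\<Sum>v\<in>?S. c v *s v) = (\<Sum>i\<in>UNIV. c (?r i) *s ?r i)"
        by (rule sum.reindex[OF inj, unfolded comp_def])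
      also have "\<dots> = (\<Sum>i\<in>UNIV. y$i *s ?r i)"
        by (simp add: c_def inv_f_f[OF inj])
      also have "\<dots> = 0" using y by (simp add: vm_sum_rows)
      finally have "\<forall>v\<in>?S. c v = 0" using ind vec.independent_explicit by blast
      hence "\<forall>i. y$i = 0" by (simp add: c_def inv_f_f[OF inj])
      thus "y = 0" by (simp add: vec_eq_iff)
    qed
  next
    assume H: "\<forall>y. y v* M = 0 \<longrightarrow> y = 0"
    have inj: "inj ?r"
    proof (rule injI, rule ccontr)
      fix i j assume e: "?r i = ?r j" and ne: "i \<noteq> j"
      let ?y = "axis i 1 - axis j (1::'a)"
      have "?y v* M = ?r i - ?r j"
        by (simp add: vector_matrix_mult_diff_distrib axis_vm)
      hence "?y = 0" using H e by (metis diff_self)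
      hence "?y $ i = 0" by simp
      thus False using ne by (simp add: axis_def)
    qed
    have ind: "vec.independent ?S"
      unfolding vec.independent_explicit
    proof (intro conjI allI impI ballI)
      show "finite ?S" by simp
      fix c v assume s: "(\<Sum>v\<in>?S. c v *s v) = 0" and v: "v \<in> ?S"
      define y where "y = (\<chi> i. c (?r i))"
      have "y v* M = (\<Sum>i\<in>UNIV. c (?r i) *s ?r i)" by (simp add: vm_sum_rows y_def)
      also have "\<dots> = (\<Sum>v\<in>?S. c v *s v)"
        by (rule sum.reindex[OF inj, unfolded comp_def, symmetric])
      finally have "y = 0" using H s by simp
      then show "c v = 0" using v by (auto simp: y_def vec_eq_iff)
    qed
    have "vec.dim ?S = card ?S" by (rule vec.dim_eq_card_independent[OF ind])
    also have "\<dots> = CARD('m)" using inj by (simp add: card_image)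
    finally show "rank M = CARD('m)" by (simp add: row_rank_def_gen S)
  qed
qed



lemma det0_kernel:
  fixes K :: "'a::field^'n^'n"
  assumes "det K = 0" shows "\<exists>v. v \<noteq> 0 \<and> K *v v = 0"
  using assms invertible_det_nz[of K] invertible_left_inverse[of K] matrix_left_invertible_ker[of K]
  by blast

lemma matrix_inv_props:
  fixes K :: "'a::field^'n^'n"
  assumes "det K \<noteq> 0"
  shows "K ** matrix_inv K = mat 1" "matrix_inv K ** K = mat 1"
proof -
  have "invertible K" using assms invertible_det_nz by blast
  then have "\<exists>K'. K ** K' = mat 1 \<and> K' ** K = mat 1" unfolding invertible_def .
  then have "K ** matrix_inv K = mat 1 \<and> matrix_inv K ** K = mat 1"
    unfolding matrix_inv_def by (rule someI_ex)
  then show "K ** matrix_inv K = mat 1" "matrix_inv K ** K = mat 1" by auto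
qed

lemma mat_mulv: "mat (c::'a::comm_ring_1) *v v = c *s v"
proof -
  have "\<And>i. (\<Sum>j\<in>UNIV. (if i = j then c else 0) * v$j) = c * v$i"
  proof -
    fix i
    have "(\<Sum>j\<in>UNIV. (if i = j then c else 0) * v$j) = (\<Sum>j\<in>UNIV. if i = j then c * v$j else 0)"
      by (rule sum.cong) auto
    then show "(\<Sum>j\<in>UNIV. (if i = j then c else 0) * v$j) = c * v$i" by simp
  qed
  then show ?thesis by (simp add: vec_eq_iff matrix_vector_mult_def mat_def)
qed

lemma eig_det:
  fixes A :: "real^'d^'d"
  assumes "det (mat s - cmat A) = 0" shows "is_ceigenvalue A s"
proof -
  obtain v where v: "v \<noteq> 0" "(mat s - cmat A) *v v = 0" using det0_kernel[OF assms] by blast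
  then have "cmat A *v v = s *s v" by (simp add: matrix_vector_mult_diff_rdistrib mat_mulv)
  then show ?thesis using v unfolding is_ceigenvalue_def by blast
qed

lemma det_poly:
  fixes p :: "'n::finite \<Rightarrow> 'n \<Rightarrow> 'a::comm_ring_1 poly"
  shows "\<exists>P. \<forall>x. det ((\<chi> i j. poly (p i j) x)::'a^'n^'n) = poly P x"
proof
  let ?P = "\<Sum>q\<in>{q. q permutes (UNIV::'n set)}. [:of_int (sign q):] * (\<Prod>i\<in>UNIV. p i (q i))"
  show "\<forall>x. det ((\<chi> i j. poly (p i j) x)::'a^'n^'n) = poly ?P x"
    by (simp add: det_def poly_sum poly_prod)
qed

lemma det_holo:
  fixes f :: "complex \<Rightarrow> complex^'n^'n"
  assumes "\<And>i j. (\<lambda>x. f x $ i $ j) holomorphic_on S"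
  shows "(\<lambda>x. det (f x)) holomorphic_on S"
  unfolding det_def by (intro holomorphic_intros assms)

lemma bad_finite:
  fixes A :: "real^'d^'d"
  assumes stab: "\<And>s. is_ceigenvalue A s \<Longrightarrow> Re s \<le> 0"
  shows "finite {s. det (mat s - cmat A) = 0}"
proof -
  define p where "p i j = [: - cmat A $ i $ j, if i = j then 1 else 0 :]" for i j
  have M: "mat s - cmat A = (\<chi> i j. poly (p i j) s)" for s
    by (simp add: vec_eq_iff p_def mat_def)
  obtain P where P: "\<And>x. det ((\<chi> i j. poly (p i j) x)::complex^'d^'d) = poly P x"
    using det_poly[of p] by blast
  have "det (mat 1 - cmat A) \<noteq> 0" using stab eig_det[of 1 A] by fastforce
  then have "P \<noteq> 0" using P M by auto
  then have "finite {s. poly P s = 0}" by (rule poly_roots_finite)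
  then show ?thesis using P M by simp
qed



lemma mv_axis: "((R::'a::comm_ring_1^'n^'m) *v axis k 1) $ l = R $ l $ k"
proof -
  have "(\<Sum>j\<in>UNIV. R$l$j * (if j = k then 1 else 0)) = (\<Sum>j\<in>UNIV. if j = k then R$l$j else 0)"
    by (rule sum.cong) auto
  then show ?thesis by (simp add: matrix_vector_mult_def axis_def)
qed

lemma inv_entry:
  fixes K :: "'a::field^'n^'n"
  assumes d: "det K \<noteq> 0"
  shows "matrix_inv K $ l $ k = det ((\<chi> i j. if j = l then axis k 1 $ i else K$i$j)::'a^'n^'n) / det K"
proof -
  have "K *v (matrix_inv K *v axis k 1) = axis k 1"
    by (simp add: matrix_vector_mul_assoc matrix_inv_props[OF d])
  then have "matrix_inv K *v axis k 1 = (\<chi> l. det ((\<chi> i j. if j = l then axis k 1 $ i else K$i$j)::'a^'n^'n) / det K)"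
    using cramer[OF d] by blast
  then have "(matrix_inv K *v axis k 1) $ l = det ((\<chi> i j. if j = l then axis k 1 $ i else K$i$j)::'a^'n^'n) / det K"
    by simp
  then show ?thesis by (simp add: mv_axis)
qed

lemma Mentry: "(mat x - cmat A) $ i $ j = (if i = j then x else 0) - cmat A $ i $ j"
  by (simp add: mat_def)

lemma mat_entry: "mat x $ i $ j = (if i = j then x else 0)"
  by (simp add: mat_def)

lemma holo_if_x: "(\<lambda>x::complex. (if i = j then x else 0) - c) holomorphic_on S"
  by (cases "i = j") (simp_all add: holomorphic_intros)

lemma inv_holo:
  fixes A :: "real^'d^'d"
  assumes stab: "\<And>s. is_ceigenvalue A s \<Longrightarrow> Re s \<le> 0"
  shows "(\<lambda>x. matrix_inv (mat x - cmat A) $ l $ k) holomorphic_on RHP"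
proof -
  have nz: "det (mat x - cmat A) \<noteq> 0" if "x \<in> RHP" for x
    using that stab eig_det[of x A] by (force simp: RHP_def)
  let ?N = "\<lambda>x. ((\<chi> i j. if j = l then axis k 1 $ i else (mat x - cmat A)$i$j)::complex^'d^'d)"
  have h1: "(\<lambda>x. det (?N x)) holomorphic_on RHP"
  proof (rule det_holo)
    fix i j show "(\<lambda>x. ?N x $ i $ j) holomorphic_on RHP"
      by (cases "j = l") (simp_all add: mat_entry holo_if_x)
  qed
  have h2: "(\<lambda>x. det (mat x - cmat A)) holomorphic_on RHP"
    by (rule det_holo) (simp add: mat_entry holo_if_x)
  have "(\<lambda>x. det (?N x) / det (mat x - cmat A)) holomorphic_on RHP"
    using h1 h2 nz by (intro holomorphic_intros) auto
  then show ?thesis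
    by (rule holomorphic_transform) (simp add: inv_entry nz)
qed

lemma Z_analytic:
  fixes A :: "real^'d^'d"
  assumes stab: "\<And>s. is_ceigenvalue A s \<Longrightarrow> Re s \<le> 0"
  shows "(\<lambda>x. ratmat A B L W x $ i $ j) analytic_on RHP"
proof -
  have o: "open RHP" unfolding RHP_def by (simp add: open_halfspace_Re_gt)
  show ?thesis unfolding analytic_on_open[OF o] ratmat_def
    by (simp add: matrix_matrix_mult_def) (intro holomorphic_intros inv_holo[OF stab])
qed



lemma mm_add_r: "((A::'a::semiring_1^'n^'m) + B) ** C = A ** C + B ** C"
  by (simp add: matrix_matrix_mult_def vec_eq_iff distrib_right sum.distrib)
lemma mm_diff_l: "(A::'a::ring_1^'n^'m) ** (B - C) = A ** B - A ** C"
  by (simp add: matrix_matrix_mult_def vec_eq_iff right_diff_distrib sum_subtractf)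
lemma mm_diff_r: "((A::'a::ring_1^'n^'m) - B) ** C = A ** C - B ** C"
  by (simp add: matrix_matrix_mult_def vec_eq_iff left_diff_distrib sum_subtractf)
lemma mm_neg_l: "(- (A::'a::ring_1^'n^'m)) ** C = - (A ** C)"
  by (simp add: matrix_matrix_mult_def vec_eq_iff sum_negf)
lemma mm_neg_r: "(A::'a::ring_1^'n^'m) ** (- C) = - (A ** C)"
  by (simp add: matrix_matrix_mult_def vec_eq_iff sum_negf)
lemma tr_add: "transpose (A + B) = transpose A + transpose (B::'a::semiring_1^'n^'m)"
  by (simp add: transpose_def vec_eq_iff)
lemma tr_diff: "transpose (A - B) = transpose A - transpose (B::'a::ring_1^'n^'m)"
  by (simp add: transpose_def vec_eq_iff)
lemma tr_neg: "transpose (- A) = - transpose (A::'a::ring_1^'n^'m)"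
  by (simp add: transpose_def vec_eq_iff)

lemma cmat_mult: "cmat (X ** Y) = cmat X ** cmat Y"
  by (simp add: cmat_def matrix_matrix_mult_def vec_eq_iff)
lemma cmat_tr: "cmat (transpose X) = transpose (cmat X)"
  by (simp add: cmat_def transpose_def vec_eq_iff)
lemma cmat_add: "cmat (X + Y) = cmat X + cmat Y"
  by (simp add: cmat_def vec_eq_iff)
lemma cmat_diff: "cmat (X - Y) = cmat X - cmat Y"
  by (simp add: cmat_def vec_eq_iff)
lemma cmat_neg: "cmat (- X) = - cmat X"
  by (simp add: cmat_def vec_eq_iff)

lemma mat_comm: "mat (c::'a::comm_ring_1) ** X + X ** mat (- c) = 0"
proof -
  have l: "mat c ** X = (\<chi> i j. c * X$i$j)"
  proof -
    have "\<And>i j. (\<Sum>k\<in>UNIV. (if i = k then c else 0) * X$k$j) = c * X$i$j"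
    proof -
      fix i j
      have "(\<Sum>k\<in>UNIV. (if i = k then c else 0) * X$k$j) = (\<Sum>k\<in>UNIV. if i = k then c * X$k$j else 0)"
        by (rule sum.cong) auto
      then show "(\<Sum>k\<in>UNIV. (if i = k then c else 0) * X$k$j) = c * X$i$j" by simp
    qed
    then show ?thesis by (simp add: matrix_matrix_mult_def mat_def vec_eq_iff)
  qed
  have r: "X ** mat (- c) = (\<chi> i j. X$i$j * (- c))"
  proof -
    have "\<And>i j. (\<Sum>k\<in>UNIV. X$i$k * (if k = j then - c else 0)) = X$i$j * (- c)"
    proof -
      fix i j
      have "(\<Sum>k\<in>UNIV. X$i$k * (if k = j then - c else 0)) = (\<Sum>k\<in>UNIV. if k = j then X$i$k * (- c) else 0)"
        by (rule sum.cong) auto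
      then show "(\<Sum>k\<in>UNIV. X$i$k * (if k = j then - c else 0)) = X$i$j * (- c)" by simp
    qed
    then show ?thesis by (simp add: matrix_matrix_mult_def mat_def vec_eq_iff)
  qed
  show ?thesis by (simp add: l r vec_eq_iff)
qed

lemmas mmsimps = matrix_add_ldistrib mm_add_r mm_diff_l mm_diff_r mm_neg_l mm_neg_r matrix_mul_assoc

lemma key_identity:
  fixes a x R S :: "complex^'d^'d" and b :: "complex^'n^'d" and c :: "complex^'d^'n"
    and dd :: "complex^'n^'n" and l :: "complex^'d^'r" and w :: "complex^'n^'r"
  assumes hR: "(mat \<xi> - a) ** R = mat 1"
    and hS: "(mat (-\<xi>) - a) ** S = mat 1"
    and e1: "- (transpose a ** x) - x ** a = transpose l ** l"
    and e2: "c - transpose b ** x = transpose w ** l"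
    and e3: "dd + transpose dd = transpose w ** w"
    and sx: "transpose x = x"
  shows "(transpose w + transpose b ** transpose S ** transpose l) ** (w + l ** R ** b)
       = dd + c ** R ** b + (transpose dd + transpose b ** transpose S ** transpose c)"
proof -
  let ?S = "transpose S" and ?a = "transpose a" and ?b = "transpose b"
  have hS': "?S ** (mat (-\<xi>) - ?a) = mat 1"
    using arg_cong[OF hS, of transpose] by (simp add: matrix_transpose_mul tr_diff)
  have ll: "transpose l ** l = (mat (-\<xi>) - ?a) ** x + x ** (mat \<xi> - a)"
  proof -
    have "(mat (-\<xi>) - ?a) ** x + x ** (mat \<xi> - a) = (mat (-\<xi>) ** x + x ** mat (- (-\<xi>))) - ?a ** x - x ** a"
      by (simp add: mmsimps algebra_simps)
    also have "\<dots> = - (?a ** x) - x ** a" by (simp only: mat_comm) simp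
    finally show ?thesis using e1 by simp
  qed
  have K: "?S ** (transpose l ** l) ** R = x ** R + ?S ** x"
  proof -
    have "?S ** (transpose l ** l) ** R = (?S ** (mat (-\<xi>) - ?a)) ** x ** R + ?S ** x ** ((mat \<xi> - a) ** R)"
      unfolding ll by (simp add: mmsimps)
    also have "\<dots> = x ** R + ?S ** x" by (simp add: hS' hR)
    finally show ?thesis .
  qed
  have wl: "transpose l ** w = transpose c - x ** b"
    using arg_cong[OF e2, of transpose] sx by (simp add: matrix_transpose_mul tr_diff)
  have "(transpose w + ?b ** ?S ** transpose l) ** (w + l ** R ** b)
     = transpose w ** w + (transpose w ** l) ** R ** b + ?b ** ?S ** (transpose l ** w)
       + ?b ** (?S ** (transpose l ** l) ** R) ** b"
    by (simp add: mmsimps algebra_simps)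
  also have "\<dots> = dd + transpose dd + (c - ?b ** x) ** R ** b + ?b ** ?S ** (transpose c - x ** b)
       + ?b ** (x ** R + ?S ** x) ** b"
    by (simp only: K wl e2 e3)
  also have "\<dots> = dd + c ** R ** b + (transpose dd + ?b ** ?S ** transpose c)"
    by (simp add: mmsimps algebra_simps)
  finally show ?thesis .
qed



lemma sum_UNIV_plus:
  "(\<Sum>i\<in>(UNIV::('a::finite+'b::finite) set). f i) = (\<Sum>a\<in>UNIV. f (Inl a)) + (\<Sum>b\<in>UNIV. f (Inr b))"
  using sum.Plus[of "UNIV::'a set" "UNIV::'b set" f] by (simp add: comp_def)

lemma vm_neg: "(- x) v* (A::'a::ring_1^'n^'m) = - (x v* A)"
  by (simp add: vec_eq_iff vector_matrix_mult_def sum_negf)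

lemma vm_add: "(x + y) v* (A::'a::ring_1^'n^'m) = x v* A + y v* A"
  by (simp add: vec_eq_iff vector_matrix_mult_def sum.distrib algebra_simps)

lemma vm_mat1: "x v* mat 1 = (x::'a::comm_ring_1^'n)"
  by (metis matrix_vector_mul_lid transpose_mat vector_transpose_matrix)

lemma Y_Inl:
  "(y v* Ymat A B L W s) $ Inl b
     = ((\<chi> a. y $ Inl a) v* (mat s - cmat A) + (\<chi> p. y $ Inr p) v* cmat L) $ b"
  by (simp add: vector_matrix_mult_def Ymat_def sum_UNIV_plus)

lemma Y_Inr:
  "(y v* Ymat A B L W s) $ Inr c
     = ((\<chi> p. y $ Inr p) v* cmat W - (\<chi> a. y $ Inl a) v* cmat B) $ c"
  by (simp add: vector_matrix_mult_def Ymat_def sum_UNIV_plus sum_negf)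

lemma vec_plus_eq: "(y::'a^('b::finite+'c::finite)) = z \<longleftrightarrow> (\<forall>a. y $ Inl a = z $ Inl a) \<and> (\<forall>b. y $ Inr b = z $ Inr b)"
  by (metis sum.exhaust vec_eq_iff)

lemma Y_zero_iff:
  "y v* Ymat A B L W s = 0 \<longleftrightarrow>
     (\<chi> a. y $ Inl a) v* (mat s - cmat A) + (\<chi> p. y $ Inr p) v* cmat L = 0 \<and>
     (\<chi> p. y $ Inr p) v* cmat W - (\<chi> a. y $ Inl a) v* cmat B = 0"
  by (simp add: vec_plus_eq Y_Inl Y_Inr vec_eq_iff)

lemma Z_Y_kernel:
  fixes A :: "real^'d^'d" and B :: "real^'n^'d" and L :: "real^'d^'r" and W :: "real^'n^'r"
  assumes d: "det (mat s - cmat A) \<noteq> 0"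
  shows "(\<forall>w. w v* ratmat A B L W s = 0 \<longrightarrow> w = 0) \<longleftrightarrow>
         (\<forall>y. y v* Ymat A B L W s = 0 \<longrightarrow> y = 0)"
proof -
  let ?M = "mat s - cmat A"
  let ?R = "matrix_inv ?M"
  have MR: "?M ** ?R = mat 1" and RM: "?R ** ?M = mat 1" using matrix_inv_props[OF d] by auto
  have Zw: "w v* ratmat A B L W s = w v* cmat W + ((w v* cmat L) v* ?R) v* cmat B" for w
    by (simp add: ratmat_def vector_matrix_mult_add_rdistrib vector_matrix_mul_assoc)
  show ?thesis
  proof
    assume H: "\<forall>w. w v* ratmat A B L W s = 0 \<longrightarrow> w = 0"
    show "\<forall>y. y v* Ymat A B L W s = 0 \<longrightarrow> y = 0"
    proof (intro allI impI)
      fix y assume y: "y v* Ymat A B L W s = 0"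
      define u where "u = (\<chi> a. y $ Inl a)"
      define w where "w = (\<chi> p. y $ Inr p)"
      have e1: "u v* ?M + w v* cmat L = 0" and e2: "w v* cmat W - u v* cmat B = 0"
        using y unfolding Y_zero_iff u_def w_def by auto
      have uM: "u v* ?M = - (w v* cmat L)" using e1 by (simp add: eq_neg_iff_add_eq_0)
      have u: "u = - ((w v* cmat L) v* ?R)"
      proof -
        have "u = (u v* ?M) v* ?R" by (simp add: vector_matrix_mul_assoc MR vm_mat1)
        then show ?thesis by (simp add: uM vm_neg)
      qed
      have "w v* ratmat A B L W s = 0" unfolding Zw using e2 by (simp add: u vm_neg)
      then have w0: "w = 0" using H by blast
      then have "u v* ?M = 0" using uM by simp
      then have u0: "u = 0" using u w0 by simp
      show "y = 0" using u0 w0 by (simp add: vec_plus_eq u_def w_def vec_eq_iff)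
    qed
  next
    assume H: "\<forall>y. y v* Ymat A B L W s = 0 \<longrightarrow> y = 0"
    show "\<forall>w. w v* ratmat A B L W s = 0 \<longrightarrow> w = 0"
    proof (intro allI impI)
      fix w assume wz: "w v* ratmat A B L W s = 0"
      define u where "u = - ((w v* cmat L) v* ?R)"
      define y :: "complex^('d+'r)" where "y = (\<chi> i. case i of Inl a \<Rightarrow> u $ a | Inr p \<Rightarrow> w $ p)"
      have yu: "(\<chi> a. y $ Inl a) = u" and yw: "(\<chi> p. y $ Inr p) = w" by (simp_all add: y_def)
      have "u v* ?M = - (w v* cmat L)"
        by (simp add: u_def vm_neg vector_matrix_mul_assoc RM vm_mat1 flip: matrix_mul_assoc)
      moreover have "w v* cmat W - u v* cmat B = 0" using wz unfolding Zw by (simp add: u_def vm_neg)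
      ultimately have "y v* Ymat A B L W s = 0" unfolding Y_zero_iff yu yw by simp
      then have "y = 0" using H by blast
      then show "w = 0" using yw by (metis vec_lambda_unique zero_index)
    qed
  qed
qed



theorem lemmaD1:
  fixes A :: "real^'d^'d" and B :: "real^'n^'d" and C :: "real^'d^'n" and D :: "real^'n^'n"
    and X :: "real^'d^'d" and L :: "real^'d^'r" and W :: "real^'n^'r"
  assumes stab: "\<And>s. is_ceigenvalue A s \<Longrightarrow> Re s \<le> 0"
    and symX: "transpose X = X"
    and eq1: "- (transpose A ** X) - X ** A = transpose L ** L"
    and eq2: "C - transpose B ** X = transpose W ** L"
    and eq3: "D + transpose D = transpose W ** W"
  shows "rat_eq (\<lambda>\<xi>. para_adj (ratmat A B L W) \<xi> ** ratmat A B L W \<xi>)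
                (\<lambda>\<xi>. ratmat A B C D \<xi> + para_adj (ratmat A B C D) \<xi>)
       \<and> (spectral_factor (ratmat A B L W)
            (\<lambda>\<xi>. ratmat A B C D \<xi> + para_adj (ratmat A B C D) \<xi>)
          \<longleftrightarrow> (\<forall>s. Re s > 0 \<longrightarrow> rank (Ymat A B L W s) = CARD('d + 'r)))"
proof -
  define E where "E = {s. det (mat s - cmat A) = 0}"
  have fE: "finite E" unfolding E_def by (rule bad_finite[OF stab])
  have c1: "- (transpose (cmat A) ** cmat X) - cmat X ** cmat A = transpose (cmat L) ** cmat L"
    using arg_cong[OF eq1, of cmat] by (simp add: cmat_diff cmat_neg cmat_mult cmat_tr)
  have c2: "cmat C - transpose (cmat B) ** cmat X = transpose (cmat W) ** cmat L"
    using arg_cong[OF eq2, of cmat] by (simp add: cmat_diff cmat_mult cmat_tr)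
  have c3: "cmat D + transpose (cmat D) = transpose (cmat W) ** cmat W"
    using arg_cong[OF eq3, of cmat] by (simp add: cmat_add cmat_mult cmat_tr)
  have c4: "transpose (cmat X) = cmat X" using symX by (simp flip: cmat_tr)
  have eqpt: "para_adj (ratmat A B L W) \<xi> ** ratmat A B L W \<xi> = ratmat A B C D \<xi> + para_adj (ratmat A B C D) \<xi>"
    if "\<xi> \<notin> E" "- \<xi> \<notin> E" for \<xi>
  proof -
    have hR: "(mat \<xi> - cmat A) ** matrix_inv (mat \<xi> - cmat A) = mat 1"
      using that matrix_inv_props[of "mat \<xi> - cmat A"] by (auto simp: E_def)
    have hS: "(mat (-\<xi>) - cmat A) ** matrix_inv (mat (-\<xi>) - cmat A) = mat 1"
      using that matrix_inv_props[of "mat (-\<xi>) - cmat A"] by (auto simp: E_def)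
    show ?thesis
      using key_identity[OF hR hS c1 c2 c3 c4]
      by (simp add: para_adj_def ratmat_def tr_add matrix_transpose_mul matrix_mul_assoc)
  qed
  have P1: "rat_eq (\<lambda>\<xi>. para_adj (ratmat A B L W) \<xi> ** ratmat A B L W \<xi>)
                (\<lambda>\<xi>. ratmat A B C D \<xi> + para_adj (ratmat A B C D) \<xi>)"
    unfolding rat_eq_def
  proof (rule finite_subset)
    show "{\<xi>. para_adj (ratmat A B L W) \<xi> ** ratmat A B L W \<xi> \<noteq> ratmat A B C D \<xi> + para_adj (ratmat A B C D) \<xi>}
          \<subseteq> E \<union> uminus ` E"
      using eqpt by (auto simp: image_iff) (metis minus_minus)
    show "finite (E \<union> uminus ` E)" using fE by simp
  qed
  have rk: "rank (ratmat A B L W s) = CARD('r) \<longleftrightarrow> rank (Ymat A B L W s) = CARD('d + 'r)"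
    if "Re s > 0" for s
  proof -
    have d: "det (mat s - cmat A) \<noteq> 0" using that stab eig_det[of s A] by force
    show ?thesis unfolding full_row_rank_iff using Z_Y_kernel[OF d] by blast
  qed
  have "spectral_factor (ratmat A B L W) (\<lambda>\<xi>. ratmat A B C D \<xi> + para_adj (ratmat A B C D) \<xi>)
        \<longleftrightarrow> (\<forall>s\<in>RHP. rank (ratmat A B L W s) = CARD('r))"
    unfolding spectral_factor_def using P1 Z_analytic[OF stab] by blast
  also have "\<dots> \<longleftrightarrow> (\<forall>s. Re s > 0 \<longrightarrow> rank (Ymat A B L W s) = CARD('d + 'r))"
    using rk by (auto simp: RHP_def)
  finally show ?thesis using P1 by blast
qed

end
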